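(* Suppose $T\in\mathcal B(\mathcal H)$ is quasitriangular and $\{P_n\}$ is a filtration with $\|(I-P_n)TP_n\|\to0$. Let $T_n=P_nT|_{P_n\mathcal H}$, an operator on the finite-dimensional space $P_n\mathcal H$. Then $j_{T_n}(\lambda)\to j_T(\lambda)$ for every $\lambda\in\mathbb C$.
   Context: $\mathcal H$ is a complex separable Hilbert space. For an operator $A$ on a Hilbert space $\mathcal K$, $j_A(z)=\inf\{\|(A-z)h\|:h\in\mathcal K,\|h\|=1\}$. A filtration is a sequence $\{P_n\}$ of finite-rank orthogonal projections with $\operatorname{Ran}P_n\subseteq\operatorname{Ran}P_{n+1}$ and $\bigcup_n\operatorname{Ran}P_n$ dense in $\mathcal H$. $T$ is quasitriangular if there is a filtration $\{P_n\}$ with $\|(I-P_n)TP_n\|\to0$. *)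

theory Defs
  imports "HOL-Analysis.Analysis"
begin

text \<open>A complex Hilbert space is modelled as a real Hilbert space (type class
real_inner + complete_space) together with a complex structure J (multiplication
by the imaginary unit): a real-linear isometry with J (J x) = - x.
Complex scalar multiplication is c x = Re c x + Im c (J x); the complex inner
product has real part equal to the real inner product, so norms agree.\<close>

definition complex_structure :: "('a::real_inner \<Rightarrow> 'a) \<Rightarrow> bool" where
  "complex_structure J \<longleftrightarrow> linear J \<and> (\<forall>x. J (J x) = - x) \<and> (\<forall>x. norm (J x) = norm x)"

definition cscale :: "('a::real_vector \<Rightarrow> 'a) \<Rightarrow> complex \<Rightarrow> 'a \<Rightarrow> 'a" where
  "cscale J c x = Re c *\<^sub>R x + Im c *\<^sub>R J x"

definition bounded_clinear_op :: "('a::real_normed_vector \<Rightarrow> 'a) \<Rightarrow> ('a \<Rightarrow> 'a) \<Rightarrow> bool" where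
  "bounded_clinear_op J T \<longleftrightarrow> bounded_linear T \<and> (\<forall>x. T (J x) = J (T x))"

definition finite_rank_orth_proj :: "('a::real_inner \<Rightarrow> 'a) \<Rightarrow> ('a \<Rightarrow> 'a) \<Rightarrow> bool" where
  "finite_rank_orth_proj J P \<longleftrightarrow> bounded_clinear_op J P \<and> (\<forall>x. P (P x) = P x)
     \<and> (\<forall>x y. inner (P x) y = inner x (P y))
     \<and> (\<exists>B. finite B \<and> range P = span B)"

definition filtration :: "('a::real_inner \<Rightarrow> 'a) \<Rightarrow> (nat \<Rightarrow> 'a \<Rightarrow> 'a) \<Rightarrow> bool" where
  "filtration J P \<longleftrightarrow> (\<forall>n. finite_rank_orth_proj J (P n))
     \<and> (\<forall>n. range (P n) \<subseteq> range (P (Suc n)))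
     \<and> closure (\<Union>n. range (P n)) = UNIV"

definition quasitriangular :: "('a::real_inner \<Rightarrow> 'a) \<Rightarrow> ('a \<Rightarrow> 'a) \<Rightarrow> bool" where
  "quasitriangular J T \<longleftrightarrow> (\<exists>P. filtration J P \<and>
     ((\<lambda>n. onorm (\<lambda>x. T (P n x) - P n (T (P n x)))) \<longlonglongrightarrow> 0))"

definition jfun :: "('a::real_normed_vector \<Rightarrow> 'a) \<Rightarrow> 'a set \<Rightarrow> ('a \<Rightarrow> 'a) \<Rightarrow> complex \<Rightarrow> real" where
  "jfun J K A z = Inf {norm (A h - cscale J z h) | h. h \<in> K \<and> norm h = 1}"

end

theory Submission
  imports Defs
begin

lemma proj_norm_le:
  fixes P :: "'a::real_inner \<Rightarrow> 'a"
  assumes bl: "bounded_linear P" and idem: "\<forall>x. P (P x) = P x"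
    and sa: "\<forall>x y. inner (P x) y = inner x (P y)"
  shows "norm (P x) \<le> norm x"
proof -
  interpret bounded_linear P by fact
  have o: "inner (P x) (x - P x) = 0"
  proof -
    have "inner (P x) (P x) = inner x (P (P x))" using sa by simp
    also have "\<dots> = inner x (P x)" using idem by simp
    also have "\<dots> = inner (P x) x" by (simp add: inner_commute)
    finally show ?thesis by (simp add: inner_diff_right)
  qed
  have "(norm x)^2 = (norm (P x + (x - P x)))^2" by simp
  also have "\<dots> = (norm (P x))^2 + (norm (x - P x))^2"
    by (simp only: power2_norm_eq_inner inner_add_left inner_add_right o)
       (simp add: inner_commute o)
  finally have "(norm (P x))^2 \<le> (norm x)^2" by simp
  thus ?thesis by (simp add: power2_le_iff_abs_le)
qed

lemma P_cscale:
  assumes "bounded_linear P" "\<forall>x. P (J x) = J (P x)"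
  shows "P (cscale J z x) = cscale J z (P x)"
proof -
  interpret bounded_linear P by fact
  show ?thesis using assms(2) by (simp add: cscale_def add scaleR)
qed

lemma range_fix:
  assumes "\<forall>x. P (P x) = P x" "h \<in> range P" shows "P h = h"
  using assms by auto

lemma range_scale:
  assumes "bounded_linear P" "\<forall>x. P (P x) = P x" "h \<in> range P"
  shows "c *\<^sub>R h \<in> range P"
proof -
  interpret bounded_linear P by fact
  have "P (c *\<^sub>R h) = c *\<^sub>R h" using assms by (auto simp: scaleR)
  thus ?thesis by (metis rangeI)
qed

theorem lemma3p2:
  fixes J :: "'a::{real_inner, complete_space} \<Rightarrow> 'a"
    and T :: "'a \<Rightarrow> 'a" and P :: "nat \<Rightarrow> 'a \<Rightarrow> 'a"
  assumes "complex_structure J"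
    and "\<exists>D::'a set. countable D \<and> closure D = UNIV"
    and "bounded_clinear_op J T"
    and "quasitriangular J T"
    and "filtration J P"
    and "(\<lambda>n. onorm (\<lambda>x. T (P n x) - P n (T (P n x)))) \<longlonglongrightarrow> 0"
  shows "\<forall>z::complex. (\<lambda>n. jfun J (range (P n)) (\<lambda>h. P n (T h)) z) \<longlonglongrightarrow> jfun J UNIV T z"
proof
  fix z :: complex
  have Jl: "linear J" and Jn: "\<And>x. norm (J x) = norm x"
    using assms(1) unfolding complex_structure_def by auto
  have Jbl: "bounded_linear J"
  proof -
    interpret linear J by fact
    show ?thesis by (rule bounded_linear_intro[where K=1]) (auto simp: add scale Jn)
  qed
  have Tbl: "bounded_linear T" using assms(3) unfolding bounded_clinear_op_def by auto
  have fp: "\<And>n. finite_rank_orth_proj J (P n)" and mono: "\<And>n. range (P n) \<subseteq> range (P (Suc n))"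
    and dense: "closure (\<Union>n. range (P n)) = UNIV"
    using assms(5) unfolding filtration_def by auto
  have Pbl: "\<And>n. bounded_linear (P n)" and PJ: "\<And>n. \<forall>x. P n (J x) = J (P n x)"
    and Pid: "\<And>n. \<forall>x. P n (P n x) = P n x"
    and Psa: "\<And>n. \<forall>x y. inner (P n x) y = inner x (P n y)"
    using fp unfolding finite_rank_orth_proj_def bounded_clinear_op_def by auto
  define A where "A = (\<lambda>h. T h - cscale J z h)"
  have Abl: "bounded_linear A"
    unfolding A_def cscale_def
    by (intro bounded_linear_sub Tbl bounded_linear_add bounded_linear_scaleR_right
        bounded_linear_ident Jbl bounded_linear_compose[OF bounded_linear_scaleR_right Jbl])
  define e where "e = (\<lambda>n. onorm (\<lambda>x. T (P n x) - P n (T (P n x))))"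
  have ebl: "\<And>n. bounded_linear (\<lambda>x. T (P n x) - P n (T (P n x)))"
    by (intro bounded_linear_sub bounded_linear_compose[OF Tbl] Pbl
        bounded_linear_compose[OF Pbl])
  have mono_le: "\<And>m n. m \<le> n \<Longrightarrow> range (P m) \<subseteq> range (P n)"
    by (rule lift_Suc_mono_le[of "\<lambda>n. range (P n)", OF mono])
  define S where "S = {norm (T h - cscale J z h) | h. h \<in> UNIV \<and> norm h = 1}"
  define Sn where "Sn = (\<lambda>n. {norm (P n (T h) - cscale J z h) | h. h \<in> range (P n) \<and> norm h = 1})"
  have jS: "jfun J UNIV T z = Inf S" unfolding jfun_def S_def by simp
  have jSn: "\<And>n. jfun J (range (P n)) (\<lambda>h. P n (T h)) z = Inf (Sn n)"
    unfolding jfun_def Sn_def by simp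
  show "(\<lambda>n. jfun J (range (P n)) (\<lambda>h. P n (T h)) z) \<longlonglongrightarrow> jfun J UNIV T z"
  proof (cases "\<exists>u::'a. norm u = 1")
    case False
    hence "S = {}" "\<And>n. Sn n = {}" unfolding S_def Sn_def by auto
    thus ?thesis unfolding jS jSn by simp
  next
    case True
    then obtain u :: 'a where u: "norm u = 1" by blast
    have Sne: "S \<noteq> {}" using u unfolding S_def by auto
    have Sbd: "bdd_below S" unfolding S_def by (rule bdd_belowI[of _ 0]) auto
    have key: "\<And>n h. h \<in> range (P n) \<Longrightarrow>
        norm (P n (T h) - cscale J z h) = norm (P n (A h))
        \<and> norm (A h) \<le> norm (P n (A h)) + e n * norm h"
    proof -
      fix n h assume hr: "h \<in> range (P n)"
      interpret Pn: bounded_linear "P n" by (rule Pbl)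
      have Ph: "P n h = h" using hr Pid[of n] by auto
      have Pc: "P n (cscale J z h) = cscale J z h"
        using P_cscale[OF Pbl PJ, of n z h] Ph by simp
      have eq1: "P n (A h) = P n (T h) - cscale J z h"
        unfolding A_def using Pc by (simp add: Pn.diff)
      have eq2: "A h - P n (A h) = T (P n h) - P n (T (P n h))"
        using eq1 Ph unfolding A_def by simp
      have "norm (A h) \<le> norm (P n (A h)) + norm (A h - P n (A h))"
        by (metis add_diff_cancel_left' diff_add_cancel norm_triangle_ineq)
      also have "norm (A h - P n (A h)) \<le> e n * norm h"
        unfolding eq2 e_def by (rule onorm[OF ebl])
      finally show "norm (P n (T h) - cscale J z h) = norm (P n (A h))
        \<and> norm (A h) \<le> norm (P n (A h)) + e n * norm h" using eq1 by simp
    qed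
    have approx: "\<And>h0 d. norm h0 = 1 \<Longrightarrow> d > 0 \<Longrightarrow>
         \<exists>N. \<forall>n\<ge>N. \<exists>g\<in>range (P n). norm g = 1 \<and> norm (g - h0) < d"
    proof -
      fix h0 :: 'a and d :: real assume h0: "norm h0 = 1" and d: "d > 0"
      have "h0 \<in> closure (\<Union>n. range (P n))" using dense by simp
      then obtain y where yU: "y \<in> (\<Union>n. range (P n))" and dy: "dist y h0 < min (d/2) (1/2)"
      proof -
        have "min (d/2) (1/2) > 0" using d by simp
        then obtain y where "y \<in> (\<Union>n. range (P n))" "dist y h0 < min (d/2) (1/2)"
          using \<open>h0 \<in> closure (\<Union>n. range (P n))\<close> unfolding closure_approachable by blast
        thus ?thesis using that by blast
      qed
      then obtain m where ym: "y \<in> range (P m)" by auto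
      have dy': "norm (y - h0) < min (d/2) (1/2)" using dy by (simp add: dist_norm)
      have "norm h0 \<le> norm y + norm (y - h0)"
        by (metis add.commute diff_add_cancel norm_minus_commute norm_triangle_ineq)
      hence ny: "norm y > 1/2" using h0 dy' by linarith
      define g where "g = (1 / norm y) *\<^sub>R y"
      have gn: "norm g = 1" using ny by (auto simp: g_def)
      have "g - y = (1 / norm y - 1) *\<^sub>R y" by (simp add: g_def algebra_simps)
      hence "norm (g - y) = \<bar>1 / norm y - 1\<bar> * norm y" by simp
      also have "\<dots> = \<bar>(1 / norm y - 1) * norm y\<bar>" by (simp add: abs_mult)
      also have "\<dots> = \<bar>1 - norm y\<bar>"
      proof -
        have nz: "norm y \<noteq> 0" using ny by linarith
        have "(1 / norm y - 1) * norm y = 1 - norm y" using nz by (simp add: field_simps)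
        thus ?thesis by simp
      qed
      also have "\<dots> = \<bar>norm h0 - norm y\<bar>" using h0 by simp
      also have "\<dots> \<le> norm (y - h0)"
        by (metis norm_minus_commute norm_triangle_ineq3)
      finally have "norm (g - y) \<le> norm (y - h0)" .
      moreover have "norm (g - h0) \<le> norm (g - y) + norm (y - h0)"
        by (metis diff_add_cancel add_diff_eq norm_triangle_ineq diff_diff_add
            add.commute)
      ultimately have gd: "norm (g - h0) < d" using dy' by linarith
      have gm: "g \<in> range (P m)" unfolding g_def by (rule range_scale[OF Pbl Pid ym])
      show "\<exists>N. \<forall>n\<ge>N. \<exists>g\<in>range (P n). norm g = 1 \<and> norm (g - h0) < d"
        using gm gn gd mono_le by blast
    qed
    obtain C where C: "C > 0" "\<And>x. norm (A x) \<le> norm x * C"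
      using bounded_linear.pos_bounded[OF Abl] by blast
    show ?thesis
      unfolding jS jSn
    proof (rule LIMSEQ_I)
      fix r :: real assume r: "r > 0"
      have "e \<longlonglongrightarrow> 0" using assms(6) unfolding e_def by simp
      then obtain N1 where N1: "\<And>n. n \<ge> N1 \<Longrightarrow> norm (e n - 0) < r/2"
        using r by (metis LIMSEQ_D half_gt_zero)
      have "Inf S < Inf S + r/4" using r by simp
      then obtain s where sS: "s \<in> S" and sl: "s < Inf S + r/4"
        using cInf_lessD[OF Sne] by blast
      then obtain h0 where h0: "norm h0 = 1" "s = norm (A h0)"
        unfolding S_def A_def by auto
      obtain N2 where N2: "\<And>n. n \<ge> N2 \<Longrightarrow>
           \<exists>g\<in>range (P n). norm g = 1 \<and> norm (g - h0) < r / (4 * C)"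
        using approx[OF h0(1), of "r/(4*C)"] r C by auto
      show "\<exists>N. \<forall>n\<ge>N. norm (Inf (Sn n) - Inf S) < r"
      proof (intro exI allI impI)
        fix n assume n: "max N1 N2 \<le> n"
        have en: "\<bar>e n\<bar> < r/2" using N1[of n] n by simp
        obtain g where g: "g \<in> range (P n)" "norm g = 1" "norm (g - h0) < r / (4 * C)"
          using N2[of n] n by auto
        have "norm (A g) \<le> norm (A h0) + norm (A g - A h0)"
          by (metis add_diff_cancel_left' diff_add_cancel norm_triangle_ineq
              add.commute)
        also have "A g - A h0 = A (g - h0)" by (simp add: linear_diff[OF bounded_linear.linear[OF Abl]])
        also have "norm (A (g - h0)) \<le> norm (g - h0) * C" by (rule C(2))
        also have "norm (g - h0) * C \<le> r/4"
          using g(3) C(1) by (simp add: field_simps)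
        finally have Ag: "norm (A g) \<le> s + r/4" using h0 by simp
        have gv: "norm (P n (A g)) \<in> Sn n"
          using key[OF g(1)] g unfolding Sn_def by force
        have Snne: "Sn n \<noteq> {}" using gv by blast
        have Snbd: "bdd_below (Sn n)" unfolding Sn_def by (rule bdd_belowI[of _ 0]) auto
        have up: "Inf (Sn n) \<le> norm (A g)"
          using cInf_lower[OF gv Snbd]
            proj_norm_le[OF Pbl Pid Psa, of n "A g"] by linarith
        have lo: "Inf S - r/2 \<le> Inf (Sn n)"
        proof (rule cInf_greatest[OF Snne])
          fix t assume "t \<in> Sn n"
          then obtain h where h: "h \<in> range (P n)" "norm h = 1"
            "t = norm (P n (T h) - cscale J z h)" unfolding Sn_def by auto
          have "norm (A h) \<in> S" using h(2) unfolding S_def A_def by auto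
          hence "Inf S \<le> norm (A h)" using cInf_lower[OF _ Sbd] by blast
          thus "Inf S - r/2 \<le> t" using key[OF h(1)] h en by auto
        qed
        show "norm (Inf (Sn n) - Inf S) < r"
          using up Ag sl lo r by (simp add: abs_less_iff)
      qed
    qed
  qed
qed

end
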